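(* Let $a,b,c,L_F>0$ and let $\gamma$ be a real number with $2c<\gamma<a-c$. Then the following hold. (1) For all $p\ge 0$, $$r_\gamma(p)=p\bigl(\gamma-c+G(c)-G(\gamma-a+bp)\bigr),$$ and $r_\gamma$ is differentiable on $[0,\infty)$ (one-sided at $0$) with $$r_\gamma'(p)=\gamma-c+G(c)-G(\gamma-a+bp)-bp\,F(\gamma-a+bp).$$ (2) $r_\gamma'$ is $L_r$-Lipschitz on $[0,a/b]$, where $L_r:=2b+abL_F$. (3) $r_\gamma'$ is non-increasing on $[0,\infty)$. (4) There is a unique $p^*_\gamma\in(0,a/b)$ with $r_\gamma'(p^*_\gamma)=0$; moreover $r_\gamma$ is non-decreasing on $[0,p^*_\gamma]$ and non-increasing on $[p^*_\gamma,a/b]$ (so $p^*_\gamma$ maximizes $r_\gamma$ on $[0,a/b]$). (5) With $C_s:=L_r/2$, for all $p\in[0,a/b]$: $r_\gamma(p^*_\gamma)-r_\gamma(p)\le C_s(p^*_\gamma-p)^2$. (6) There exists a constant $C_\epsilon>0$ depending only on $a,b,c,L_F$ (and not on $\gamma$), and for each such $\gamma$ there exists $\epsilon_\gamma$ with $0<\epsilon_\gamma\le\min\{p^*_\gamma,\,a/b-p^*_\gamma\}$, such that for all $p_1,p_2\in[p^*_\gamma-\epsilon_\gamma,p^*_\gamma+\epsilon_\gamma]$: $|r_\gamma'(p_1)-r_\gamma'(p_2)|\ge C_\epsilon|p_1-p_2|$. (7) With $C_v:=C_s/C_\epsilon^2$ (depending only on $a,b,c,L_F$), for all $p\in(p^*_\gamma-\epsilon_\gamma,p^*_\gamma+\epsilon_\gamma)$: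 $r_\gamma(p^*_\gamma)-r_\gamma(p)\le C_v\,(r_\gamma'(p))^2$.
   Context: Let $N$ be a real random variable taking values in $[-c,c]$ with $\mathbb{E}[N]=0$, whose cumulative distribution function $F$ is $L_F$-Lipschitz (so $F(-c)=0$, $F(c)=1$; no density is assumed). Define the integrated CDF $G(x):=\int_{-\infty}^x F(\omega)\,d\omega$ for $x\in\mathbb{R}$. The potential demand at price $p$ is $a-bp+N$, the inventory level is $\gamma$, and the observed (censored) demand is $\min\{\gamma,a-bp+N\}$. The expected revenue function is $r_\gamma(p):=p\cdot\mathbb{E}_N\bigl[\min\{\gamma,\,a-bp+N\}\bigr]$ for $p\ge 0$, and $r_\gamma'$ denotes its derivative in $p$. *)

theory Defs
  imports "HOL-Analysis.Analysis" "HOL-Probability.Probability"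
begin

definition cdfN :: "'a measure \<Rightarrow> ('a \<Rightarrow> real) \<Rightarrow> real \<Rightarrow> real" where
  "cdfN M N x = measure M {\<omega> \<in> space M. N \<omega> \<le> x}"

definition intcdf :: "'a measure \<Rightarrow> ('a \<Rightarrow> real) \<Rightarrow> real \<Rightarrow> real" where
  "intcdf M N x = integral {..x} (cdfN M N)"

definition revenue :: "'a measure \<Rightarrow> ('a \<Rightarrow> real) \<Rightarrow> real \<Rightarrow> real \<Rightarrow> real \<Rightarrow> real \<Rightarrow> real" where
  "revenue M N a b \<gamma> p = p * (\<integral>\<omega>. min \<gamma> (a - b * p + N \<omega>) \<partial>M)"

definition revenue_der :: "'a measure \<Rightarrow> ('a \<Rightarrow> real) \<Rightarrow> real \<Rightarrow> real \<Rightarrow> real \<Rightarrow> real \<Rightarrow> real \<Rightarrow> real" where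
  "revenue_der M N a b c \<gamma> p =
     \<gamma> - c + intcdf M N c - intcdf M N (\<gamma> - a + b * p) - b * p * cdfN M N (\<gamma> - a + b * p)"

end

theory Submission imports Defs begin

locale nsetup =
  fixes M :: "'a measure" and N :: "'a \<Rightarrow> real" and c LF :: real
  assumes P: "prob_space M" and meas[measurable]: "N \<in> borel_measurable M"
    and bnd: "\<And>\<omega>. \<omega> \<in> space M \<Longrightarrow> -c \<le> N \<omega> \<and> N \<omega> \<le> c"
    and mean0: "(\<integral>\<omega>. N \<omega> \<partial>M) = 0"
    and lip: "LF-lipschitz_on UNIV (cdfN M N)" and cpos: "c > 0"
begin

interpretation prob_space M by (rule P)

definition phi :: "real \<Rightarrow> real" where
  "phi t = (\<integral>\<omega>. max 0 (t - N \<omega>) \<partial>M)"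

abbreviation F where "F \<equiv> cdfN M N"

lemma LF_nonneg: "0 \<le> LF" using lip by (auto simp: lipschitz_on_def)

lemma F_lip: "\<bar>F x - F y\<bar> \<le> LF * \<bar>x - y\<bar>"
  using lip by (auto simp: lipschitz_on_def dist_real_def)

lemma sets_le[measurable]: "{\<omega> \<in> space M. N \<omega> \<le> x} \<in> sets M"
  by measurable

lemma F_int: "F x = (\<integral>\<omega>. indicator {\<omega> \<in> space M. N \<omega> \<le> x} \<omega> \<partial>M)"
  by (simp add: cdfN_def Int_absorb2 sets.sets_into_space)

lemma F_nonneg: "0 \<le> F x" by (simp add: cdfN_def)
lemma F_le1: "F x \<le> 1" by (simp add: cdfN_def)
lemma F_mono: "x \<le> y \<Longrightarrow> F x \<le> F y"
  unfolding cdfN_def by (rule finite_measure_mono) auto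
lemma F_one: "c \<le> x \<Longrightarrow> F x = 1"
proof -
  assume "c \<le> x"
  then have "{\<omega> \<in> space M. N \<omega> \<le> x} = space M" using bnd by force
  then show ?thesis by (simp add: cdfN_def prob_space)
qed
lemma F_zero_lt: "x < -c \<Longrightarrow> F x = 0"
proof -
  assume "x < -c"
  then have e: "{\<omega> \<in> space M. N \<omega> \<le> x} = {}" using bnd by force
  show ?thesis unfolding cdfN_def e by simp
qed
lemma F_zero: "x \<le> -c \<Longrightarrow> F x = 0"
proof -
  assume x: "x \<le> -c"
  have "F x \<le> LF * h" if "h > 0" for h
  proof -
    have "F x \<le> F (x - h) + LF * \<bar>x - (x - h)\<bar>" using F_lip[of x "x-h"] by linarith
    also have "F (x - h) = 0" using F_zero_lt x that by simp
    finally show ?thesis using that by simp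
  qed
  have "F x \<le> 0"
  proof (rule ccontr)
    assume "\<not> F x \<le> 0"
    then have pos: "F x > 0" by simp
    define h where "h = F x / (2 * (LF + 1))"
    have hp: "h > 0" using pos LF_nonneg by (simp add: h_def)
    have "LF * h \<le> (LF + 1) * h" using hp by simp
    also have "(LF + 1) * h = F x / 2" using LF_nonneg by (simp add: h_def field_simps)
    finally show False using \<open>\<And>h. h > 0 \<Longrightarrow> F x \<le> LF * h\<close>[OF hp] pos by simp
  qed
  then show ?thesis using F_nonneg by (simp add: order_antisym)
qed

lemma int_max: "integrable M (\<lambda>\<omega>. max 0 (t - N \<omega>))"
proof (rule integrable_const_bound[where B="\<bar>t\<bar> + c"])
  show "AE x in M. norm (max 0 (t - N x)) \<le> \<bar>t\<bar> + c" using bnd cpos by (force intro!: AE_I2) 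
qed measurable

lemma int_ind: "integrable M (\<lambda>\<omega>. indicator {\<omega> \<in> space M. N \<omega> \<le> x} \<omega> :: real)"
  by (rule integrable_const_bound[where B=1]) auto

lemma key: assumes "s \<le> u"
  shows "(u - s) * F s \<le> phi u - phi s \<and> phi u - phi s \<le> (u - s) * F u"
proof -
  let ?I = "\<lambda>x \<omega>. indicator {\<omega> \<in> space M. N \<omega> \<le> x} \<omega> :: real"
  have d: "phi u - phi s = (\<integral>\<omega>. max 0 (u - N \<omega>) - max 0 (s - N \<omega>) \<partial>M)"
    unfolding phi_def using Bochner_Integration.integral_diff[OF int_max int_max] by simp
  have l: "(u - s) * F s = (\<integral>\<omega>. (u - s) * ?I s \<omega> \<partial>M)" by (simp add: F_int)
  have r: "(u - s) * F u = (\<integral>\<omega>. (u - s) * ?I u \<omega> \<partial>M)" by (simp add: F_int)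
  have i1: "integrable M (\<lambda>\<omega>. (u - s) * ?I x \<omega>)" for x
    using int_ind[of x] by simp
  have i2: "integrable M (\<lambda>\<omega>. max 0 (u - N \<omega>) - max 0 (s - N \<omega>))"
    using int_max by simp
  have "(\<integral>\<omega>. (u - s) * ?I s \<omega> \<partial>M) \<le> (\<integral>\<omega>. max 0 (u - N \<omega>) - max 0 (s - N \<omega>) \<partial>M)"
    by (rule integral_mono) (use assms i1 i2 in \<open>auto simp: indicator_def\<close>)
  moreover have "(\<integral>\<omega>. max 0 (u - N \<omega>) - max 0 (s - N \<omega>) \<partial>M) \<le> (\<integral>\<omega>. (u - s) * ?I u \<omega> \<partial>M)"
    by (rule integral_mono) (use assms i1 i2 in \<open>auto simp: indicator_def\<close>)
  ultimately show ?thesis unfolding d l r by simp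
qed


lemma int_N: "integrable M N"
  by (rule integrable_const_bound[where B=c]) (auto intro!: AE_I2 simp: abs_le_iff dest: bnd)

lemma phi_zero: "t \<le> -c \<Longrightarrow> phi t = 0"
proof -
  assume t: "t \<le> -c"
  have "phi t = (\<integral>\<omega>. 0 \<partial>M)" unfolding phi_def
    by (rule Bochner_Integration.integral_cong) (use bnd t in force)+
  then show ?thesis by simp
qed

lemma phi_lin: "c \<le> t \<Longrightarrow> phi t = t"
proof -
  assume t: "c \<le> t"
  have "phi t = (\<integral>\<omega>. t - N \<omega> \<partial>M)" unfolding phi_def
    by (rule Bochner_Integration.integral_cong) (use bnd t in force)+
  also have "\<dots> = t - (\<integral>\<omega>. N \<omega> \<partial>M)"
    using Bochner_Integration.integral_diff[OF integrable_const int_N] by (simp add: prob_space)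
  finally show ?thesis using mean0 by simp
qed

lemma phi_approx: "\<bar>phi y - phi t - (y - t) * F t\<bar> \<le> LF * (y - t)^2"
proof (cases "t \<le> y")
  case True
  have "F y - F t \<le> LF * (y - t)" using F_lip[of y t] True by simp
  then have "(y - t) * (F y - F t) \<le> (y - t) * (LF * (y - t))"
    using True by (intro mult_left_mono) auto
  then show ?thesis using key[OF True] True by (simp add: power2_eq_square algebra_simps)
next
  case False
  then have ty: "y \<le> t" by simp
  have "F t - F y \<le> LF * (t - y)" using F_lip[of t y] ty by simp
  then have "(t - y) * (F t - F y) \<le> (t - y) * (LF * (t - y))"
    using ty by (intro mult_left_mono) auto
  then show ?thesis using key[OF ty] ty by (simp add: power2_eq_square algebra_simps)
qed

lemma phi_deriv: "(phi has_real_derivative F t) (at t)"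
proof -
  have "((\<lambda>y. (phi y - phi t) / (y - t) - F t) \<longlongrightarrow> 0) (at t)"
  proof (rule Lim_null_comparison)
    show "\<forall>\<^sub>F y in at t. norm ((phi y - phi t) / (y - t) - F t) \<le> LF * \<bar>y - t\<bar>"
    proof -
      have "\<forall>\<^sub>F y in at t. y \<noteq> t" by (simp add: eventually_at_filter)
      then show ?thesis
      proof (rule eventually_mono)
        fix y assume yt: "y \<noteq> t"
        have e: "(phi y - phi t) / (y - t) - F t = (phi y - phi t - (y - t) * F t) / (y - t)"
          using yt by (simp add: field_simps)
        have "\<bar>phi y - phi t - (y - t) * F t\<bar> \<le> LF * \<bar>y - t\<bar> * \<bar>y - t\<bar>"
          using phi_approx[of y t] by (simp add: power2_eq_square abs_mult_self)
        then show "norm ((phi y - phi t) / (y - t) - F t) \<le> LF * \<bar>y - t\<bar>"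
          unfolding e using yt by (simp add: abs_divide divide_le_eq)
      qed
    qed
    show "((\<lambda>y. LF * \<bar>y - t\<bar>) \<longlongrightarrow> 0) (at t)"
      by (intro tendsto_eq_intros) auto
  qed
  then show ?thesis unfolding has_field_derivative_iff by (rule LIM_zero_cancel)
qed

lemma G_eq: "intcdf M N x = phi x"
proof -
  have "(F has_integral phi x) {..x}"
  proof (cases "x \<le> -c")
    case True
    have "(F has_integral 0) {..x}" by (rule has_integral_is_0) (use True F_zero in auto)
    then show ?thesis using phi_zero True by simp
  next
    case False
    have "(F has_integral (phi x - phi (-c))) {-c..x}"
      by (rule fundamental_theorem_of_calculus) (use False in \<open>auto intro!: has_real_derivative_iff_has_vector_derivative[THEN iffD1, OF DERIV_subset[OF phi_deriv]]\<close>)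
    then have i1: "(F has_integral phi x) {-c..x}" using phi_zero[of "-c"] by simp
    have i0: "(F has_integral 0) {..-c}" by (rule has_integral_is_0) (use F_zero in auto)
    have "(F has_integral (0 + phi x)) ({..-c} \<union> {-c..x})"
      by (rule has_integral_Un[OF i0 i1]) (rule negligible_subset[of "{-c}"], auto)
    moreover have "{..-c} \<union> {-c..x} = {..x}" using False by auto
    ultimately show ?thesis by simp
  qed
  then show ?thesis unfolding intcdf_def by (rule integral_unique)
qed

lemma Emin: "(\<integral>\<omega>. min g (a - b * p + N \<omega>) \<partial>M) = g - phi (g - a + b * p)"
proof -
  have "(\<integral>\<omega>. min g (a - b * p + N \<omega>) \<partial>M) = (\<integral>\<omega>. g - max 0 ((g - a + b * p) - N \<omega>) \<partial>M)"
    by (rule Bochner_Integration.integral_cong) auto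
  also have "\<dots> = g - phi (g - a + b * p)"
    unfolding phi_def using Bochner_Integration.integral_diff[OF integrable_const int_max] by (simp add: prob_space)
  finally show ?thesis .
qed


lemma phi_lip: "\<bar>phi u - phi s\<bar> \<le> \<bar>u - s\<bar>"
proof (cases "s \<le> u")
  case True
  have "(u - s) * F u \<le> (u - s) * 1" using True F_le1 by (intro mult_left_mono) auto
  moreover have "0 \<le> (u - s) * F s" using True F_nonneg[of s] by simp
  ultimately show ?thesis using key[OF True] True by (simp add: abs_le_iff) 
next
  case False
  then have us: "u \<le> s" by simp
  have "(s - u) * F s \<le> (s - u) * 1" using us F_le1 by (intro mult_left_mono) auto
  moreover have "0 \<le> (s - u) * F u" using us F_nonneg[of u] by simp
  ultimately show ?thesis using key[OF us] us by (simp add: abs_le_iff) 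
qed

lemma phi_mono: "s \<le> u \<Longrightarrow> phi s \<le> phi u"
  using key[of s u] F_nonneg[of s] by (simp add: zero_le_mult_iff) (smt (verit) mult_nonneg_nonneg)

end

locale nsetup2 = nsetup +
  fixes a b g :: real
  assumes apos: "a > 0" and bpos: "b > 0" and g1: "2 * c < g" and g2: "g < a - c" and LFpos: "LF > 0"
begin

definition tt where "tt p = g - a + b * p"
definition R where "R p = p * (g - phi (tt p))"
definition R' where "R' p = g - phi (tt p) - b * p * F (tt p)"

lemma rev_eq: "revenue M N a b g = R"
  by (rule ext) (simp add: revenue_def R_def Emin tt_def)

lemma revder_eq: "revenue_der M N a b c g = R'"
  using cpos by (intro ext) (simp add: revenue_der_def R'_def G_eq phi_lin tt_def)

lemma R_formula: "R p = p * (g - c + intcdf M N c - intcdf M N (g - a + b * p))"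
  using cpos by (simp add: R_def G_eq phi_lin tt_def)

lemma R_deriv: "(R has_real_derivative R' p) (at p)"
proof -
  have t: "(tt has_real_derivative b) (at p)"
    unfolding tt_def by (auto intro!: derivative_eq_intros)
  have d1: "((\<lambda>p. phi (tt p)) has_real_derivative F (tt p) * b) (at p)"
    by (rule DERIV_chain2[OF phi_deriv t])
  have "((\<lambda>p. p * (g - phi (tt p))) has_real_derivative 1 * (g - phi (tt p)) + (0 - F (tt p) * b) * p) (at p)"
    by (rule DERIV_mult[OF DERIV_ident DERIV_diff[OF DERIV_const d1]])
  then show ?thesis unfolding R_def[abs_def] R'_def by (simp add: algebra_simps)
qed

lemma R'_lip: "(2 * b + a * b * LF)-lipschitz_on {0..a/b} R'"
proof (rule lipschitz_onI)
  show "0 \<le> 2 * b + a * b * LF" using apos bpos LF_nonneg by simp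
  fix x y assume x: "x \<in> {0..a/b}" and y: "y \<in> {0..a/b}"
  have d: "R' x - R' y = (phi (tt y) - phi (tt x)) + b * ((y - x) * F (tt x) + y * (F (tt y) - F (tt x)))"
    by (simp add: R'_def algebra_simps)
  have tdiff: "\<bar>tt y - tt x\<bar> = b * \<bar>x - y\<bar>" using bpos by (simp add: tt_def abs_mult flip: abs_minus_commute right_diff_distrib)
  have A: "\<bar>phi (tt y) - phi (tt x)\<bar> \<le> b * \<bar>x - y\<bar>" using phi_lip tdiff by metis
  have B: "\<bar>(y - x) * F (tt x)\<bar> \<le> \<bar>x - y\<bar>"
    using F_nonneg[of "tt x"] F_le1[of "tt x"] by (simp add: abs_mult abs_minus_commute mult_left_le)
  have C0: "\<bar>F (tt y) - F (tt x)\<bar> \<le> LF * (b * \<bar>x - y\<bar>)" using F_lip[of "tt y" "tt x"] tdiff by simp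
  have "\<bar>y * (F (tt y) - F (tt x))\<bar> = y * \<bar>F (tt y) - F (tt x)\<bar>" using y by (simp add: abs_mult)
  also have "\<dots> \<le> (a/b) * (LF * (b * \<bar>x - y\<bar>))"
    using y C0 LF_nonneg by (intro mult_mono) auto
  also have "\<dots> = a * LF * \<bar>x - y\<bar>" using bpos by simp
  finally have C: "\<bar>y * (F (tt y) - F (tt x))\<bar> \<le> a * LF * \<bar>x - y\<bar>" .
  have "\<bar>(y - x) * F (tt x) + y * (F (tt y) - F (tt x))\<bar> \<le> \<bar>x - y\<bar> + a * LF * \<bar>x - y\<bar>"
    using B C by linarith
  then have D: "b * \<bar>(y - x) * F (tt x) + y * (F (tt y) - F (tt x))\<bar> \<le> b * (\<bar>x - y\<bar> + a * LF * \<bar>x - y\<bar>)"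
    using bpos by simp
  have "\<bar>R' x - R' y\<bar> \<le> b * \<bar>x - y\<bar> + b * (\<bar>x - y\<bar> + a * LF * \<bar>x - y\<bar>)"
  proof -
    have "\<bar>R' x - R' y\<bar> \<le> \<bar>phi (tt y) - phi (tt x)\<bar> + \<bar>b * ((y - x) * F (tt x) + y * (F (tt y) - F (tt x)))\<bar>"
      unfolding d by (rule abs_triangle_ineq)
    also have "\<bar>b * ((y - x) * F (tt x) + y * (F (tt y) - F (tt x)))\<bar> = b * \<bar>(y - x) * F (tt x) + y * (F (tt y) - F (tt x))\<bar>"
      using bpos by (simp add: abs_mult)
    finally show ?thesis using A D by linarith
  qed
  also have "\<dots> = (2 * b + a * b * LF) * \<bar>x - y\<bar>" by (simp add: algebra_simps)
  finally show "dist (R' x) (R' y) \<le> (2 * b + a * b * LF) * dist x y" by (simp add: dist_real_def)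
qed

lemma SM: assumes "0 \<le> p1" "p1 \<le> p2"
  shows "R' p1 - R' p2 \<ge> b * (p2 - p1) * (F (tt p1) + F (tt p2))"
proof -
  have tl: "tt p1 \<le> tt p2" using assms bpos by (simp add: tt_def)
  have k: "(tt p2 - tt p1) * F (tt p1) \<le> phi (tt p2) - phi (tt p1)" using key[OF tl] by simp
  have tdif: "tt p2 - tt p1 = b * (p2 - p1)" by (simp add: tt_def algebra_simps)
  have m: "p1 * F (tt p1) \<le> p1 * F (tt p2)" using assms F_mono[OF tl] by (intro mult_left_mono) auto
  have "R' p1 - R' p2 = (phi (tt p2) - phi (tt p1)) + b * (p2 * F (tt p2) - p1 * F (tt p1))"
    by (simp add: R'_def algebra_simps)
  moreover have "b * (p2 * F (tt p2) - p1 * F (tt p1)) \<ge> b * ((p2 - p1) * F (tt p2))"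
    using m bpos by (intro mult_left_mono) (auto simp: algebra_simps)
  ultimately show ?thesis using k unfolding tdif by (simp add: algebra_simps)
qed

lemma R'_mono: "0 \<le> p \<Longrightarrow> p \<le> q \<Longrightarrow> R' q \<le> R' p"
  using SM[of p q] bpos F_nonneg[of "tt p"] F_nonneg[of "tt q"]
  by (smt (verit, ccfv_SIG) mult_nonneg_nonneg)

lemma R'0: "R' 0 = g"
  using g2 by (simp add: R'_def tt_def phi_zero)

lemma R'ab: "R' (a/b) = -a"
  using g1 cpos bpos by (simp add: R'_def tt_def phi_lin F_one)


abbreviation "Lr \<equiv> 2 * b + a * b * LF"

lemma ab_pos: "0 < a / b" using apos bpos by simp

lemma R'_cont: "continuous_on {0..a/b} R'"
  by (rule lipschitz_on_continuous_on[OF R'_lip])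

lemma zero_exists: "\<exists>ps. 0 < ps \<and> ps < a/b \<and> R' ps = 0"
proof -
  obtain x where x: "0 \<le> x" "x \<le> a/b" "R' x = 0"
    using IVT2'[of R' "a/b" 0 0, OF _ _ _ R'_cont] R'ab R'0 apos g1 cpos ab_pos by auto
  have "x \<noteq> 0" using x R'0 g1 cpos by auto
  moreover have "x \<noteq> a/b" using x R'ab apos by auto
  ultimately show ?thesis using x by (intro exI[of _ x]) auto
qed

lemma zero_unique_aux: assumes "0 \<le> p1" "p1 < p2" "R' p1 = 0" "R' p2 = 0" shows False
proof -
  have "b * (p2 - p1) * (F (tt p1) + F (tt p2)) \<le> 0" using SM[of p1 p2] assms by simp
  then have "F (tt p1) + F (tt p2) \<le> 0" using bpos assms by (simp add: mult_le_0_iff)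
  then have F2: "F (tt p2) = 0" using F_nonneg[of "tt p1"] F_nonneg[of "tt p2"] by simp
  have "phi (tt p2) \<le> 0"
  proof (cases "tt p2 \<le> -c")
    case True then show ?thesis using phi_zero by simp
  next
    case False
    then show ?thesis using key[of "-c" "tt p2"] F2 phi_zero[of "-c"] by simp
  qed
  then have "R' p2 \<ge> g" using F2 by (simp add: R'_def)
  then show False using assms g1 cpos by simp
qed

lemma F_ts: assumes "0 \<le> ps" "ps < a/b" "R' ps = 0" shows "F (tt ps) \<ge> c / a"
proof (cases "tt ps \<le> c")
  case True
  have "phi (tt ps) \<le> c" using phi_mono[OF True] phi_lin[of c] by simp
  then have "b * ps * F (tt ps) \<ge> g - c" using assms(3) by (simp add: R'_def)
  moreover have "b * ps * F (tt ps) \<le> a * F (tt ps)"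
  proof -
    have "b * ps \<le> a" using assms bpos by (simp add: field_simps)
    then show ?thesis using F_nonneg by (intro mult_right_mono) auto
  qed
  ultimately have "c \<le> a * F (tt ps)" using g1 by simp
  then show ?thesis using apos by (simp add: divide_le_eq mult.commute)
next
  case False
  then have "F (tt ps) = 1" using F_one by simp
  moreover have "c / a \<le> 1" using apos g1 g2 cpos by simp
  ultimately show ?thesis by simp
qed


context
  fixes ps assumes ps: "0 < ps" "ps < a/b" "R' ps = 0"
begin

lemma uniq: "0 < q \<Longrightarrow> q < a/b \<Longrightarrow> R' q = 0 \<Longrightarrow> q = ps"
  using zero_unique_aux[of q ps] zero_unique_aux[of ps q] ps by (cases q ps rule: linorder_cases) auto

lemma inc: assumes "0 \<le> p" "p \<le> q" "q \<le> ps" shows "R p \<le> R q"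
proof (rule DERIV_nonneg_imp_nondecreasing[OF assms(2)])
  fix x assume x: "p \<le> x" "x \<le> q"
  have "0 \<le> R' x" using R'_mono[of x ps] ps x assms by simp
  then show "\<exists>y. (R has_real_derivative y) (at x) \<and> y \<ge> 0" using R_deriv by blast
qed

lemma dec: "ps \<le> p \<Longrightarrow> p \<le> q \<Longrightarrow> q \<le> a/b \<Longrightarrow> R q \<le> R p"
proof -
  assume *: "ps \<le> p" "p \<le> q" "q \<le> a/b"
  show ?thesis
  proof (rule DERIV_nonpos_imp_nonincreasing[OF *(2)])
    fix x assume x: "p \<le> x" "x \<le> q"
    have "R' x \<le> 0" using R'_mono[of ps x] ps x * by simp
    then show "\<exists>y. (R has_real_derivative y) (at x) \<and> y \<le> 0" using R_deriv by blast
  qed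
qed

lemma R'_lipd: "x \<in> {0..a/b} \<Longrightarrow> y \<in> {0..a/b} \<Longrightarrow> \<bar>R' x - R' y\<bar> \<le> Lr * \<bar>x - y\<bar>"
  using R'_lip by (auto simp: lipschitz_on_def dist_real_def)

lemma quad: assumes p: "0 \<le> p" "p \<le> a/b" shows "R ps - R p \<le> (Lr / 2) * (ps - p)^2"
proof -
  define h where "h s = R s + (Lr / 2) * (s - ps)^2" for s
  have hd: "(h has_real_derivative R' s + Lr * (s - ps)) (at s)" for s
    unfolding h_def by (auto intro!: derivative_eq_intros R_deriv)
  show ?thesis
  proof (cases "p \<le> ps")
    case True
    have "h ps \<le> h p"
    proof (rule DERIV_nonpos_imp_nonincreasing[OF True])
      fix x assume x: "p \<le> x" "x \<le> ps"
      have "R' x - R' ps \<le> Lr * \<bar>x - ps\<bar>" using R'_lipd[of x ps] x p ps by simp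
      then have "R' x + Lr * (x - ps) \<le> 0" using x ps by (simp add: algebra_simps)
      then show "\<exists>y. (h has_real_derivative y) (at x) \<and> y \<le> 0" using hd by blast
    qed
    then show ?thesis by (simp add: h_def power2_commute)
  next
    case False
    have "h ps \<le> h p"
    proof (rule DERIV_nonneg_imp_nondecreasing[of ps p h])
      show "ps \<le> p" using False by simp
    next
      fix x assume x: "ps \<le> x" "x \<le> p"
      have "R' ps - R' x \<le> Lr * \<bar>ps - x\<bar>" using R'_lipd[of ps x] x p ps by simp
      then have "R' x + Lr * (x - ps) \<ge> 0" using x ps by (simp add: algebra_simps)
      then show "\<exists>y. (h has_real_derivative y) (at x) \<and> y \<ge> 0" using hd by blast
    qed
    then show ?thesis by (simp add: h_def power2_commute)
  qed
qed

definition eps where "eps = min (min ps (a/b - ps)) (c / (2 * a * b * LF))"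

lemma eps_pos: "0 < eps" using ps apos bpos LFpos cpos unfolding eps_def by simp

lemma F_near: assumes "p \<in> {ps - eps..ps + eps}" shows "F (tt p) \<ge> c / (2 * a)"
proof -
  have e1: "\<bar>p - ps\<bar> \<le> eps" using assms by (auto simp: abs_le_iff)
  have e2: "eps \<le> c / (2 * a * b * LF)" unfolding eps_def by (rule min.cobounded2)
  have t: "tt p - tt ps = b * (p - ps)" by (simp add: tt_def algebra_simps)
  have "\<bar>tt p - tt ps\<bar> = b * \<bar>p - ps\<bar>" unfolding t using bpos by (simp add: abs_mult)
  also have "\<dots> \<le> b * (c / (2 * a * b * LF))" using e1 e2 bpos by (intro mult_left_mono) auto
  also have "\<dots> = c / (2 * a * LF)" using bpos by simp
  finally have "LF * \<bar>tt p - tt ps\<bar> \<le> LF * (c / (2 * a * LF))" using LFpos by (intro mult_left_mono) auto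
  also have "LF * (c / (2 * a * LF)) = c / (2 * a)" using LFpos by simp
  finally have "\<bar>F (tt p) - F (tt ps)\<bar> \<le> c / (2 * a)" using F_lip[of "tt p" "tt ps"] by linarith
  moreover have "F (tt ps) \<ge> c / a" using F_ts ps by simp
  moreover have "c / a = c / (2 * a) + c / (2 * a)" by simp
  ultimately show ?thesis by linarith
qed

lemma strong: assumes "p1 \<in> {ps - eps..ps + eps}" "p2 \<in> {ps - eps..ps + eps}"
  shows "\<bar>R' p1 - R' p2\<bar> \<ge> (b * c / a) * \<bar>p1 - p2\<bar>"
proof -
  have lo: "\<And>p. p \<in> {ps - eps..ps + eps} \<Longrightarrow> 0 \<le> p" using ps by (auto simp: eps_def)
  have *: "R' x - R' y \<ge> (b * c / a) * (y - x)" if xy: "x \<le> y" "x \<in> {ps - eps..ps + eps}" "y \<in> {ps - eps..ps + eps}" for x y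
  proof -
    have "F (tt x) + F (tt y) \<ge> c / a" using F_near[OF xy(2)] F_near[OF xy(3)] by (simp add: field_simps)
    then have "b * (y - x) * (c / a) \<le> b * (y - x) * (F (tt x) + F (tt y))"
      using xy bpos by (intro mult_left_mono) auto
    then show ?thesis using SM[OF lo[OF xy(2)] xy(1)] by (simp add: field_simps)
  qed
  show ?thesis
  proof (cases "p1 \<le> p2")
    case True then show ?thesis using *[OF True assms] by (simp add: abs_le_iff abs_if)
  next
    case False then show ?thesis using *[of p2 p1] assms by (simp add: abs_le_iff abs_if)
  qed
qed

lemma eps_le: "eps \<le> min ps (a/b - ps)" unfolding eps_def by (rule min.cobounded1)

lemma vfin: assumes "p \<in> {ps - eps<..<ps + eps}"
  shows "R ps - R p \<le> ((Lr / 2) / (b * c / a)^2) * (R' p)^2"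
proof -
  have pI: "p \<in> {ps - eps..ps + eps}" using assms by auto
  have p0: "0 \<le> p" "p \<le> a/b" using assms eps_le by auto
  have C: "0 < b * c / a" using apos bpos cpos by simp
  have hh: "(b * c / a) * \<bar>p - ps\<bar> \<le> \<bar>R' p\<bar>"
    using strong[OF pI, of ps] ps eps_pos by simp
  have nn: "0 \<le> (b * c / a) * \<bar>p - ps\<bar>" using C by (intro mult_nonneg_nonneg) auto
  have "((b * c / a) * \<bar>p - ps\<bar>)^2 \<le> \<bar>R' p\<bar>^2" by (rule power_mono[OF hh nn])
  then have "((b * c / a) * \<bar>p - ps\<bar>)^2 \<le> (R' p)^2" by simp
  then have "(b * c / a)^2 * (ps - p)^2 \<le> (R' p)^2"
    by (simp only: power_mult_distrib power2_abs power2_commute[of p ps])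
  then have "(ps - p)^2 \<le> (R' p)^2 / (b * c / a)^2"
  proof -
    have K2: "0 < (b * c / a)^2" using C by (rule zero_less_power)
    show ?thesis using \<open>(b * c / a)^2 * (ps - p)^2 \<le> (R' p)^2\<close> by (simp add: pos_le_divide_eq[OF K2] mult.commute)
  qed
  then have "(Lr / 2) * (ps - p)^2 \<le> (Lr / 2) * ((R' p)^2 / (b * c / a)^2)"
    using apos bpos LFpos by (intro mult_left_mono) auto
  moreover have "(Lr / 2) * ((R' p)^2 / (b * c / a)^2) = ((Lr / 2) / (b * c / a)^2) * (R' p)^2"
    by (simp only: divide_inverse ac_simps)
  ultimately show ?thesis using quad[OF p0] by linarith
qed

end


lemma final:
  "(let r = revenue M N a b g; r' = revenue_der M N a b c g;
         F = cdfN M N; G = intcdf M N;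
         Lr = 2 * b + a * b * LF; Cs = Lr / 2; Cv = Cs / (b * c / a)\<^sup>2 in
      (\<forall>p\<ge>0. r p = p * (g - c + G c - G (g - a + b * p))
              \<and> (r has_real_derivative r' p) (at p within {0..}))
      \<and> Lr-lipschitz_on {0..a/b} r'
      \<and> (\<forall>p q. 0 \<le> p \<and> p \<le> q \<longrightarrow> r' q \<le> r' p)
      \<and> (\<exists>ps. 0 < ps \<and> ps < a/b \<and> r' ps = 0
             \<and> (\<forall>q. 0 < q \<and> q < a/b \<and> r' q = 0 \<longrightarrow> q = ps)
             \<and> (\<forall>p q. 0 \<le> p \<and> p \<le> q \<and> q \<le> ps \<longrightarrow> r p \<le> r q)
             \<and> (\<forall>p q. ps \<le> p \<and> p \<le> q \<and> q \<le> a/b \<longrightarrow> r q \<le> r p)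
             \<and> (\<forall>p. 0 \<le> p \<and> p \<le> a/b \<longrightarrow> r ps - r p \<le> Cs * (ps - p)\<^sup>2)
             \<and> (\<exists>\<epsilon>. 0 < \<epsilon> \<and> \<epsilon> \<le> min ps (a/b - ps)
                   \<and> (\<forall>p1 p2. p1 \<in> {ps - \<epsilon>..ps + \<epsilon>} \<and> p2 \<in> {ps - \<epsilon>..ps + \<epsilon>}
                              \<longrightarrow> \<bar>r' p1 - r' p2\<bar> \<ge> (b * c / a) * \<bar>p1 - p2\<bar>)
                   \<and> (\<forall>p. p \<in> {ps - \<epsilon><..<ps + \<epsilon>} \<longrightarrow> r ps - r p \<le> Cv * (r' p)\<^sup>2))))"
proof -
  obtain ps where ps: "0 < ps" "ps < a/b" "R' ps = 0" using zero_exists by blast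
  have P1: "\<forall>p\<ge>0. R p = p * (g - c + intcdf M N c - intcdf M N (g - a + b * p))
              \<and> (R has_real_derivative R' p) (at p within {0..})"
    using R_formula R_deriv by (auto intro: DERIV_subset)
  have P3: "\<forall>p q. 0 \<le> p \<and> p \<le> q \<longrightarrow> R' q \<le> R' p" using R'_mono by blast
  have P4: "\<exists>\<epsilon>. 0 < \<epsilon> \<and> \<epsilon> \<le> min ps (a/b - ps)
                   \<and> (\<forall>p1 p2. p1 \<in> {ps - \<epsilon>..ps + \<epsilon>} \<and> p2 \<in> {ps - \<epsilon>..ps + \<epsilon>}
                              \<longrightarrow> \<bar>R' p1 - R' p2\<bar> \<ge> (b * c / a) * \<bar>p1 - p2\<bar>)
                   \<and> (\<forall>p. p \<in> {ps - \<epsilon><..<ps + \<epsilon>} \<longrightarrow> R ps - R p \<le> ((Lr / 2) / (b * c / a)^2) * (R' p)\<^sup>2)"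
    using eps_pos[OF ps] eps_le[OF ps] strong[OF ps] vfin[OF ps] by blast
  have P5: "\<exists>ps. 0 < ps \<and> ps < a/b \<and> R' ps = 0
             \<and> (\<forall>q. 0 < q \<and> q < a/b \<and> R' q = 0 \<longrightarrow> q = ps)
             \<and> (\<forall>p q. 0 \<le> p \<and> p \<le> q \<and> q \<le> ps \<longrightarrow> R p \<le> R q)
             \<and> (\<forall>p q. ps \<le> p \<and> p \<le> q \<and> q \<le> a/b \<longrightarrow> R q \<le> R p)
             \<and> (\<forall>p. 0 \<le> p \<and> p \<le> a/b \<longrightarrow> R ps - R p \<le> (Lr / 2) * (ps - p)\<^sup>2)
             \<and> (\<exists>\<epsilon>. 0 < \<epsilon> \<and> \<epsilon> \<le> min ps (a/b - ps)
                   \<and> (\<forall>p1 p2. p1 \<in> {ps - \<epsilon>..ps + \<epsilon>} \<and> p2 \<in> {ps - \<epsilon>..ps + \<epsilon>}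
                              \<longrightarrow> \<bar>R' p1 - R' p2\<bar> \<ge> (b * c / a) * \<bar>p1 - p2\<bar>)
                   \<and> (\<forall>p. p \<in> {ps - \<epsilon><..<ps + \<epsilon>} \<longrightarrow> R ps - R p \<le> ((Lr / 2) / (b * c / a)^2) * (R' p)\<^sup>2))"
    using ps uniq[OF ps] inc[OF ps] dec[OF ps] quad[OF ps] P4 by (intro exI[of _ ps]) blast
  show ?thesis unfolding Let_def rev_eq revder_eq using P1 R'_lip P3 P5 by blast
qed

end
theorem lemma1:
  fixes a b c LF :: real
  assumes "a > 0" and "b > 0" and "c > 0" and "LF > 0"
  shows "\<exists>C\<epsilon> > 0. \<forall>(M :: 'a measure) (N :: 'a \<Rightarrow> real) (\<gamma> :: real).
    (prob_space M \<and> N \<in> borel_measurable M \<and> (\<forall>\<omega>\<in>space M. -c \<le> N \<omega> \<and> N \<omega> \<le> c)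
     \<and> (\<integral>\<omega>. N \<omega> \<partial>M) = 0 \<and> LF-lipschitz_on UNIV (cdfN M N)
     \<and> 2 * c < \<gamma> \<and> \<gamma> < a - c) \<longrightarrow>
    (let r = revenue M N a b \<gamma>; r' = revenue_der M N a b c \<gamma>;
         F = cdfN M N; G = intcdf M N;
         Lr = 2 * b + a * b * LF; Cs = Lr / 2; Cv = Cs / C\<epsilon>\<^sup>2 in
      (\<forall>p\<ge>0. r p = p * (\<gamma> - c + G c - G (\<gamma> - a + b * p))
              \<and> (r has_real_derivative r' p) (at p within {0..}))
      \<and> Lr-lipschitz_on {0..a/b} r'
      \<and> (\<forall>p q. 0 \<le> p \<and> p \<le> q \<longrightarrow> r' q \<le> r' p)
      \<and> (\<exists>ps. 0 < ps \<and> ps < a/b \<and> r' ps = 0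
             \<and> (\<forall>q. 0 < q \<and> q < a/b \<and> r' q = 0 \<longrightarrow> q = ps)
             \<and> (\<forall>p q. 0 \<le> p \<and> p \<le> q \<and> q \<le> ps \<longrightarrow> r p \<le> r q)
             \<and> (\<forall>p q. ps \<le> p \<and> p \<le> q \<and> q \<le> a/b \<longrightarrow> r q \<le> r p)
             \<and> (\<forall>p. 0 \<le> p \<and> p \<le> a/b \<longrightarrow> r ps - r p \<le> Cs * (ps - p)\<^sup>2)
             \<and> (\<exists>\<epsilon>. 0 < \<epsilon> \<and> \<epsilon> \<le> min ps (a/b - ps)
                   \<and> (\<forall>p1 p2. p1 \<in> {ps - \<epsilon>..ps + \<epsilon>} \<and> p2 \<in> {ps - \<epsilon>..ps + \<epsilon>}
                              \<longrightarrow> \<bar>r' p1 - r' p2\<bar> \<ge> C\<epsilon> * \<bar>p1 - p2\<bar>)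
                   \<and> (\<forall>p. p \<in> {ps - \<epsilon><..<ps + \<epsilon>} \<longrightarrow> r ps - r p \<le> Cv * (r' p)\<^sup>2))))"
proof (intro exI[of _ "b * c / a"] conjI allI impI)
  show "0 < b * c / a" using assms by simp
next
  fix M :: "'a measure" and N :: "'a \<Rightarrow> real" and \<gamma> :: real
  assume H: "prob_space M \<and> N \<in> borel_measurable M \<and> (\<forall>\<omega>\<in>space M. -c \<le> N \<omega> \<and> N \<omega> \<le> c)
     \<and> (\<integral>\<omega>. N \<omega> \<partial>M) = 0 \<and> LF-lipschitz_on UNIV (cdfN M N)
     \<and> 2 * c < \<gamma> \<and> \<gamma> < a - c"
  interpret S: nsetup2 M N c LF a b \<gamma>
    using H assms unfolding nsetup2_def nsetup_def nsetup2_axioms_def by blast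
  show "let r = revenue M N a b \<gamma>; r' = revenue_der M N a b c \<gamma>;
         F = cdfN M N; G = intcdf M N;
         Lr = 2 * b + a * b * LF; Cs = Lr / 2; Cv = Cs / (b * c / a)\<^sup>2 in
      (\<forall>p\<ge>0. r p = p * (\<gamma> - c + G c - G (\<gamma> - a + b * p))
              \<and> (r has_real_derivative r' p) (at p within {0..}))
      \<and> Lr-lipschitz_on {0..a/b} r'
      \<and> (\<forall>p q. 0 \<le> p \<and> p \<le> q \<longrightarrow> r' q \<le> r' p)
      \<and> (\<exists>ps. 0 < ps \<and> ps < a/b \<and> r' ps = 0
             \<and> (\<forall>q. 0 < q \<and> q < a/b \<and> r' q = 0 \<longrightarrow> q = ps)
             \<and> (\<forall>p q. 0 \<le> p \<and> p \<le> q \<and> q \<le> ps \<longrightarrow> r p \<le> r q)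
             \<and> (\<forall>p q. ps \<le> p \<and> p \<le> q \<and> q \<le> a/b \<longrightarrow> r q \<le> r p)
             \<and> (\<forall>p. 0 \<le> p \<and> p \<le> a/b \<longrightarrow> r ps - r p \<le> Cs * (ps - p)\<^sup>2)
             \<and> (\<exists>\<epsilon>. 0 < \<epsilon> \<and> \<epsilon> \<le> min ps (a/b - ps)
                   \<and> (\<forall>p1 p2. p1 \<in> {ps - \<epsilon>..ps + \<epsilon>} \<and> p2 \<in> {ps - \<epsilon>..ps + \<epsilon>}
                              \<longrightarrow> \<bar>r' p1 - r' p2\<bar> \<ge> (b * c / a) * \<bar>p1 - p2\<bar>)
                   \<and> (\<forall>p. p \<in> {ps - \<epsilon><..<ps + \<epsilon>} \<longrightarrow> r ps - r p \<le> Cv * (r' p)\<^sup>2)))"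
    by (rule S.final)
qed

end
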